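(* Let $X$ be Weibull distributed with shape parameter $\alpha>0$ and unit scale, i.e. $\mathbb{P}(X>x)=e^{-x^\alpha}$ for $x\geq 0$. Then for every fixed $x>0$, $$\lim_{s\to+\infty}\overline{T}_{X,s}(x)=\begin{cases}0 & \text{if } \alpha>1,\\ e^{-x} & \text{if } \alpha=1,\\ 1 & \text{if } \alpha<1,\end{cases}$$ the limit being over integers $s$.
   Context: For a nonnegative absolutely continuous random variable $X$ with density $f_X$, set $\overline{T}_{X,0}=f_X$, $\mu_{X,0}=1$, and for integers $s\geq 1$ define recursively $\overline{T}_{X,s}(x)=\frac{1}{\mu_{X,s-1}}\int_x^\infty\overline{T}_{X,s-1}(t)\,dt$ and $\mu_{X,s}=\int_0^\infty\overline{T}_{X,s}(t)\,dt$. $\overline{T}_{X,s}$ is the tail (survival function) of the $s$-iterated distribution induced by $X$. *)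

theory Defs
  imports "HOL-Analysis.Analysis"
begin

primrec iter_dist :: "(real \<Rightarrow> real) \<Rightarrow> nat \<Rightarrow> (real \<Rightarrow> real) \<times> real" where
  "iter_dist f 0 = (f, 1)"
| "iter_dist f (Suc s) =
     (let T = fst (iter_dist f s); m = snd (iter_dist f s);
          T' = (\<lambda>x. (LINT t:{x..}|lborel. T t) / m)
      in (T', LINT t:{0..}|lborel. T' t))"

definition iter_tail :: "(real \<Rightarrow> real) \<Rightarrow> nat \<Rightarrow> real \<Rightarrow> real" where
  "iter_tail f s = fst (iter_dist f s)"

definition iter_mean :: "(real \<Rightarrow> real) \<Rightarrow> nat \<Rightarrow> real" where
  "iter_mean f s = snd (iter_dist f s)"

text \<open>Density of the Weibull distribution with shape alpha and unit scale,
  P(X > x) = exp(-x^alpha) for x >= 0 (value at the null set {0} irrelevant).\<close>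
definition weibull_density :: "real \<Rightarrow> real \<Rightarrow> real" where
  "weibull_density \<alpha> x = (if x > 0 then \<alpha> * x powr (\<alpha> - 1) * exp (- (x powr \<alpha>)) else 0)"

end

theory Submission
  imports Defs
begin


lemma my_powr_at_top:
  assumes "(p::real) > 0"
  shows   "filterlim (\<lambda>x. x powr p) at_top at_top"
proof (subst filterlim_cong[OF refl refl])
  show "LIM x at_top. exp (p * ln x) :> at_top"
    by (rule filterlim_compose[OF exp_at_top filterlim_tendsto_pos_mult_at_top[OF tendsto_const]])
       (simp_all add: ln_at_top assms)
  show "eventually (\<lambda>x. x powr p = exp (p * ln x)) at_top"
    using eventually_gt_at_top[of 0] by eventually_elim (simp add: powr_def)
qed


lemma wd_meas[measurable]: "weibull_density a \<in> borel_measurable borel"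
  unfolding weibull_density_def by measurable

lemma T1:
  fixes \<alpha> x :: real
  assumes a: "\<alpha> > 0" and x: "x \<ge> 0"
  shows "(LINT t:{x..}|lborel. weibull_density \<alpha> t) = exp (- (x powr \<alpha>))"
proof -
  let ?F = "\<lambda>t. - exp (- (t powr \<alpha>))"
  have main: "(LBINT t=ereal x..\<infinity>. weibull_density \<alpha> t) = 0 - ?F x"
  proof (rule interval_integral_FTC_nonneg)
    show "ereal x < \<infinity>" by simp
    fix t assume t: "ereal x < ereal t" "ereal t < \<infinity>"
    then have tp: "t > 0" using x by simp
    show "(?F has_real_derivative weibull_density \<alpha> t) (at t)"
      using tp unfolding weibull_density_def
      by (auto intro!: derivative_eq_intros simp: powr_diff field_simps)
    have "isCont (\<lambda>t. \<alpha> * t powr (\<alpha> - 1) * exp (- (t powr \<alpha>))) t"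
      using tp by (auto intro!: continuous_intros)
    moreover have "eventually (\<lambda>s. s \<in> {0<..}) (nhds t)" using tp
      by (intro eventually_nhds_in_open) auto
    then have "eventually (\<lambda>s. weibull_density \<alpha> s = \<alpha> * s powr (\<alpha> - 1) * exp (- (s powr \<alpha>))) (nhds t)"
      by eventually_elim (simp add: weibull_density_def)
    from isCont_cong[OF this] show "isCont (weibull_density \<alpha>) t"
      using \<open>isCont (\<lambda>t. \<alpha> * t powr (\<alpha> - 1) * exp (- (t powr \<alpha>))) t\<close> by simp
  next
    show "AE t in lborel. ereal x < ereal t \<longrightarrow> ereal t < \<infinity> \<longrightarrow> 0 \<le> weibull_density \<alpha> t"
      using a by (auto simp: weibull_density_def)
  next
    show "((?F \<circ> real_of_ereal) \<longlongrightarrow> ?F x) (at_right (ereal x))"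
      unfolding ereal_tendsto_simps
    proof (cases "x = 0")
      case True
      have "((\<lambda>t. t powr \<alpha>) \<longlongrightarrow> 0) (at_right 0)"
        using a by (intro tendsto_zero_powrI) (auto intro!: tendsto_intros simp: eventually_at_filter)
      then have "(?F \<longlongrightarrow> - exp (- 0)) (at_right 0)"
        by (intro tendsto_intros)
      then show "(?F \<longlongrightarrow> ?F x) (at_right x)" using True a
        by simp
    next
      case False
      then have "isCont ?F x" using x by (auto intro!: continuous_intros)
      then show "(?F \<longlongrightarrow> ?F x) (at_right x)"
        unfolding isCont_def by (rule tendsto_within_subset) simp
    qed
  next
    have "filterlim (\<lambda>t. - (t powr \<alpha>)) at_bot at_top"
      using my_powr_at_top[OF a] by (simp add: filterlim_uminus_at_top)
    then have "((\<lambda>t. exp (- (t powr \<alpha>))) \<longlongrightarrow> 0) at_top"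
      by (rule filterlim_compose[OF exp_at_bot])
    then have "(?F \<longlongrightarrow> - 0) at_top" by (rule tendsto_minus)
    then show "((?F \<circ> real_of_ereal) \<longlongrightarrow> 0) (at_left \<infinity>)"
      unfolding ereal_tendsto_simps by simp
  qed
  have "(LINT t:{x..}|lborel. weibull_density \<alpha> t) = (LINT t:{x<..}|lborel. weibull_density \<alpha> t)"
  proof (rule set_integral_cong_set)
    show "set_borel_measurable lborel {x<..} (weibull_density \<alpha>)"
      unfolding set_borel_measurable_def by measurable
    show "set_borel_measurable lborel {x..} (weibull_density \<alpha>)"
      unfolding set_borel_measurable_def by measurable
    show "AE t in lborel. (t \<in> {x<..}) = (t \<in> {x..})"
      using AE_lborel_singleton[of x] by eventually_elim auto
  qed
  then show ?thesis using main by (simp add: interval_integral_to_infinity_eq)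
qed



definition wS :: "real \<Rightarrow> real \<Rightarrow> real" where "wS a t = exp (- (t powr a))"

lemma wS_meas[measurable]: "wS a \<in> borel_measurable borel"
  unfolding wS_def by measurable

lemma wS_pos: "wS a t > 0" unfolding wS_def by simp
lemma wS_le1: "0 \<le> t \<Longrightarrow> 0 \<le> a \<Longrightarrow> wS a t \<le> 1" unfolding wS_def by simp
lemma wS_mono: "0 \<le> s \<Longrightarrow> s \<le> t \<Longrightarrow> 0 < a \<Longrightarrow> wS a t \<le> wS a s"
  unfolding wS_def by (simp add: powr_mono2)

lemma pow_le_fact_exp: "0 \<le> (y::real) \<Longrightarrow> y ^ k \<le> fact k * exp y"
proof -
  assume y: "0 \<le> y"
  have "(\<Sum>n\<in>{k}. y ^ n / fact n) \<le> (\<Sum>n. y ^ n / fact n)"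
    using summable_exp_generic[of y] y
    by (intro sum_le_suminf) (auto simp: divide_inverse ac_simps)
  also have "\<dots> = exp y" by (simp add: exp_def divide_inverse ac_simps)
  finally have "y ^ k / fact k \<le> exp y" by simp
  then show ?thesis by (simp add: divide_le_eq mult.commute)
qed

definition Cb :: "real \<Rightarrow> nat \<Rightarrow> real" where
  "Cb a n = 4 * (1 + fact (nat \<lceil>(real n + 2) / a\<rceil>))"

lemma pt_bound:
  assumes a: "a > 0" and t: "0 \<le> t"
  shows "t ^ n * wS a t \<le> Cb a n / (1 + t)^2"
proof -
  define k where "k = nat \<lceil>(real n + 2) / a\<rceil>"
  have "t ^ n * wS a t * (1 + t)^2 \<le> Cb a n"
  proof (cases "t \<le> 1")
    case True
    have "t ^ n \<le> 1" using True t by (simp add: power_le_one)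
    moreover have "(1 + t)^2 \<le> 2^2" using True t by (intro power_mono) auto
    moreover have "wS a t \<le> 1" using t a by (simp add: wS_le1)
    moreover have "0 \<le> wS a t" using wS_pos[of a t] by simp
    ultimately have "t ^ n * wS a t * (1 + t)^2 \<le> 1 * 1 * 4"
      by (intro mult_mono) (auto simp: t)
    also have "\<dots> \<le> Cb a n" unfolding Cb_def by simp
    finally show ?thesis .
  next
    case False
    then have t1: "t > 1" by simp
    have "real n + 2 \<le> a * real k"
      unfolding k_def using a by (simp add: field_simps) (metis a divide_le_eq le_of_int_ceiling mult.commute of_nat_0_le_iff order_trans ceiling_le_zero le_nat_iff nat_le_iff)
    have "t ^ (n + 2) = t powr (real (n + 2))" by (rule powr_realpow[symmetric]) (use t1 in simp)
    also have "\<dots> \<le> t powr (a * real k)"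
      using t1 \<open>real n + 2 \<le> a * real k\<close> by (intro powr_mono) simp_all
    also have "\<dots> = (t powr a) ^ k"
      using t1 by (simp add: powr_powr[symmetric] powr_realpow)
    also have "\<dots> \<le> fact k * exp (t powr a)" by (rule pow_le_fact_exp) simp
    finally have 1: "t ^ (n + 2) * wS a t \<le> fact k"
      unfolding wS_def by (simp add: exp_minus field_simps)
    have "(1 + t)^2 \<le> (2 * t)^2" using t1 by (intro power_mono) auto
    then have "t ^ n * wS a t * (1 + t)^2 \<le> t ^ n * wS a t * (4 * t^2)"
      using t wS_pos[of a t] by (intro mult_left_mono) auto
    also have "\<dots> = 4 * (t ^ (n + 2) * wS a t)" by (simp add: power_add power2_eq_square)
    also have "\<dots> \<le> 4 * fact k" using 1 by simp
    also have "\<dots> \<le> Cb a n" unfolding Cb_def k_def by simp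
    finally show ?thesis .
  qed
  then show ?thesis using t by (simp add: field_simps)
qed

lemma int_inv_sq: "(\<integral>\<^sup>+t. ennreal (1 / (1 + t)^2) * indicator {0..} t \<partial>lborel) = 1"
proof -
  have "(\<integral>\<^sup>+t. ennreal (1 / (1 + t)^2) * indicator {0..} t \<partial>lborel) = ennreal (0 - (- 1 / (1 + 0)))"
  proof (rule nn_integral_FTC_atLeast)
    show "(\<lambda>t::real. 1 / (1 + t)^2) \<in> borel_measurable borel" by measurable
    fix t :: real assume "0 \<le> t"
    then show "((\<lambda>t. - 1 / (1 + t)) has_real_derivative 1 / (1 + t)^2) (at t)"
      by (auto intro!: derivative_eq_intros simp: power2_eq_square field_simps)
    show "0 \<le> 1 / (1 + t)^2" by simp
  next
    show "((\<lambda>t::real. - 1 / (1 + t)) \<longlongrightarrow> 0) at_top"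
      by (intro tendsto_divide_0[OF tendsto_const] filterlim_at_top_imp_at_infinity filterlim_tendsto_add_at_top[OF tendsto_const filterlim_ident])
  qed
  then show ?thesis by simp
qed

definition qn :: "real \<Rightarrow> nat \<Rightarrow> real \<Rightarrow> ennreal" where
  "qn a n x = (\<integral>\<^sup>+t. ennreal (indicator {x..} t * (t - x)^n * wS a t) \<partial>lborel)"

lemma qn_fin:
  assumes a: "a > 0" and x: "0 \<le> x"
  shows "qn a n x < \<infinity>"
proof -
  have "qn a n x \<le> (\<integral>\<^sup>+t. ennreal (Cb a n) * (ennreal (1 / (1 + t)^2) * indicator {0..} t) \<partial>lborel)"
    unfolding qn_def
  proof (intro nn_integral_mono)
    fix t :: real
    show "ennreal (indicator {x..} t * (t - x)^n * wS a t) \<le> ennreal (Cb a n) * (ennreal (1 / (1 + t)^2) * indicator {0..} t)"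
    proof (cases "x \<le> t")
      case True
      then have "(t - x)^n * wS a t \<le> t ^ n * wS a t"
        using x wS_pos[of a t] by (intro mult_right_mono power_mono) auto
      also have "\<dots> \<le> Cb a n / (1 + t)^2" using pt_bound[OF a, of t n] True x by simp
      finally have "ennreal ((t - x)^n * wS a t) \<le> ennreal (Cb a n * (1 / (1 + t)^2))"
        by (intro ennreal_leI) simp
      also have "\<dots> = ennreal (Cb a n) * ennreal (1 / (1 + t)^2)"
        by (rule ennreal_mult) (auto simp: Cb_def)
      finally show ?thesis using True x by simp
    qed simp
  qed
  also have "\<dots> = ennreal (Cb a n) * 1"
    by (subst nn_integral_cmult) (auto simp: int_inv_sq)
  finally have "qn a n x \<le> ennreal (Cb a n)" by simp
  then show ?thesis using ennreal_less_top[of "Cb a n"] by (simp add: order.strict_trans1 top_unique)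
qed



lemma sets_lborel_pair[measurable_cong]:
  "sets (lborel \<Otimes>\<^sub>M lborel) = sets (borel \<Otimes>\<^sub>M (borel :: real measure))"
  by (intro sets_pair_measure_cong) simp_all

lemma lborel_pair_meas:
  "(f :: real \<times> real \<Rightarrow> 'b) \<in> measurable (borel \<Otimes>\<^sub>M borel) N \<Longrightarrow> f \<in> measurable (lborel \<Otimes>\<^sub>M lborel) N"
  using measurable_cong_sets[OF sets_lborel_pair refl] by blast

lemma pred_snd_atLeast_fst[measurable]:
  "Measurable.pred (borel \<Otimes>\<^sub>M borel) (\<lambda>x::real\<times>real. snd x \<in> {fst x..})"
  unfolding atLeast_iff by measurable

lemma qn_pos:
  assumes a: "a > 0"
  shows "qn a n 0 > 0"
proof -
  have "(\<integral>\<^sup>+t. ennreal (wS a 2) * indicator {1..2::real} t \<partial>lborel) \<le> qn a n 0"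
    unfolding qn_def
  proof (intro nn_integral_mono)
    fix t :: real
    show "ennreal (wS a 2) * indicator {1..2} t \<le> ennreal (indicator {0..} t * (t - 0)^n * wS a t)"
    proof (cases "t \<in> {1..2}")
      case True
      then have "1 * wS a 2 \<le> t ^ n * wS a t"
        using wS_mono[of t 2 a] a wS_pos[of a 2] by (intro mult_mono) (auto simp: one_le_power)
      then show ?thesis using True by (auto intro!: ennreal_leI)
    qed simp
  qed
  moreover have "(\<integral>\<^sup>+t. ennreal (wS a 2) * indicator {1..2::real} t \<partial>lborel) = ennreal (wS a 2)"
    by (subst nn_integral_cmult_indicator) auto
  moreover have "0 < ennreal (wS a 2)" using wS_pos[of a 2] by simp
  ultimately show ?thesis by (metis order.strict_trans2)
qed

definition Qr :: "real \<Rightarrow> nat \<Rightarrow> real \<Rightarrow> real" where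
  "Qr a n x = enn2real (qn a n x)"

lemma Qr_facts:
  assumes a: "a > 0" and x: "0 \<le> x"
  shows "integrable lborel (\<lambda>t. indicator {x..} t * (t - x)^n * wS a t)"
    and "qn a n x = ennreal (Qr a n x)"
    and "Qr a n x = (LINT t:{x..}|lborel. (t - x)^n * wS a t)"
    and "Qr a n x \<ge> 0"
proof -
  have nn: "\<And>t. 0 \<le> indicator {x..} t * (t - x)^n * wS a t"
    using wS_pos by (auto simp: indicator_def less_imp_le)
  show I: "integrable lborel (\<lambda>t. indicator {x..} t * (t - x)^n * wS a t)"
    using qn_fin[OF a x, of n] nn unfolding qn_def by (intro integrableI_nonneg) auto
  show "Qr a n x \<ge> 0" unfolding Qr_def by simp
  show "qn a n x = ennreal (Qr a n x)"
    using qn_fin[OF a x, of n] unfolding Qr_def by (simp add: less_top[symmetric])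
  have "qn a n x = ennreal (\<integral>t. indicator {x..} t * (t - x)^n * wS a t \<partial>lborel)"
    unfolding qn_def using I nn by (intro nn_integral_eq_integral) auto
  moreover have "(\<integral>t. indicator {x..} t * (t - x)^n * wS a t \<partial>lborel) \<ge> 0"
    using nn by (intro integral_nonneg_AE) auto
  ultimately show "Qr a n x = (LINT t:{x..}|lborel. (t - x)^n * wS a t)"
    unfolding Qr_def set_lebesgue_integral_def by (simp add: mult.assoc)
qed

lemma Qr_pos: "a > 0 \<Longrightarrow> Qr a n 0 > 0"
  using qn_pos[of a n] Qr_facts(2)[of a 0 n] by simp

lemma inner_FTC:
  assumes xt: "x \<le> t" and that: "c \<ge> 0"
  shows "(\<integral>\<^sup>+y. ennreal (if x \<le> y \<and> y \<le> t then (t - y)^n * c else 0) \<partial>lborel)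
     = ennreal ((t - x)^(Suc n) / (Suc n) * c)"
proof -
  define F where "F = (\<lambda>y::real. - ((t - y) ^ Suc n * c / real (Suc n)))"
  have "(\<integral>\<^sup>+y. ennreal (if x \<le> y \<and> y \<le> t then (t - y)^n * c else 0) \<partial>lborel)
      = (\<integral>\<^sup>+y. ennreal ((t - y)^n * c) * indicator {x..t} y \<partial>lborel)"
    by (intro nn_integral_cong) (auto simp: indicator_def)
  also have "(\<integral>\<^sup>+y. ennreal ((t - y)^n * c) * indicator {x..t} y \<partial>lborel) = ennreal (F t - F x)"
  proof (rule nn_integral_FTC_Icc)
    show "(\<lambda>y. (t - y)^n * c) \<in> borel_measurable borel" by measurable
    fix y assume "y \<in> {x..t}"
    then have y1: "x \<le> y" and y2: "y \<le> t" by auto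
    have d1: "((\<lambda>y. (t - y) ^ Suc n) has_real_derivative of_nat (Suc n) * ((0 - 1) * (t - y) ^ (Suc n - Suc 0))) (at y)"
      by (intro DERIV_power DERIV_diff DERIV_const DERIV_ident)
    have "((\<lambda>y. - ((t - y) ^ Suc n * c / real (Suc n))) has_real_derivative
       - (of_nat (Suc n) * ((0 - 1) * (t - y) ^ (Suc n - Suc 0)) * c / real (Suc n))) (at y)"
      by (rule DERIV_minus[OF DERIV_cdivide[OF DERIV_cmult_right[OF d1]]])
    then show "(F has_real_derivative (t - y)^n * c) (at y)"
      unfolding F_def by (simp del: of_nat_Suc)
    show "0 \<le> (t - y)^n * c" using y2 that by simp
  qed (use xt in simp)
  also have "\<dots> = ennreal ((t - x)^(Suc n) / (Suc n) * c)" by (simp add: F_def)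
  finally show ?thesis .
qed

lemma tonelli_step:
  assumes a: "a > 0" and x: "0 \<le> x"
  shows "(\<integral>\<^sup>+y. ennreal (indicator {x..} y * Qr a n y) \<partial>lborel) = ennreal (1 / Suc n) * qn a (Suc n) x"
proof -
  let ?g = "\<lambda>y t. ennreal (if x \<le> y \<and> y \<le> t then (t - y)^n * wS a t else 0)"
  have "(\<integral>\<^sup>+y. ennreal (indicator {x..} y * Qr a n y) \<partial>lborel) = (\<integral>\<^sup>+y. (\<integral>\<^sup>+t. ?g y t \<partial>lborel) \<partial>lborel)"
  proof (intro nn_integral_cong)
    fix y :: real
    show "ennreal (indicator {x..} y * Qr a n y) = (\<integral>\<^sup>+t. ?g y t \<partial>lborel)"
    proof (cases "x \<le> y")
      case True
      then have "ennreal (indicator {x..} y * Qr a n y) = qn a n y"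
        using Qr_facts(2)[OF a, of y n] x by simp
      also have "\<dots> = (\<integral>\<^sup>+t. ?g y t \<partial>lborel)"
        unfolding qn_def using True by (intro nn_integral_cong) (auto simp: indicator_def)
      finally show ?thesis .
    qed simp
  qed
  also have "\<dots> = (\<integral>\<^sup>+t. (\<integral>\<^sup>+y. ?g y t \<partial>lborel) \<partial>lborel)"
    by (rule lborel_pair.Fubini'[where f="\<lambda>t y. ?g y t"], rule lborel_pair_meas) measurable
  also have "\<dots> = (\<integral>\<^sup>+t. ennreal (1 / Suc n) * ennreal (indicator {x..} t * (t - x)^(Suc n) * wS a t) \<partial>lborel)"
  proof (intro nn_integral_cong)
    fix t :: real
    show "(\<integral>\<^sup>+y. ?g y t \<partial>lborel) = ennreal (1 / Suc n) * ennreal (indicator {x..} t * (t - x)^(Suc n) * wS a t)"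
    proof (cases "x \<le> t")
      case True
      then have "(\<integral>\<^sup>+y. ?g y t \<partial>lborel) = ennreal ((t - x)^(Suc n) / (Suc n) * wS a t)"
        using wS_pos[of a t] by (intro inner_FTC) auto
      also have "\<dots> = ennreal (1 / Suc n) * ennreal (indicator {x..} t * (t - x)^(Suc n) * wS a t)"
        using True wS_pos[of a t] by (subst ennreal_mult[symmetric]) auto
      finally show ?thesis .
    next
      case False
      then have "?g y t = 0" for y by auto
      then show ?thesis using False by simp
    qed
  qed
  also have "\<dots> = ennreal (1 / Suc n) * qn a (Suc n) x"
    unfolding qn_def by (rule nn_integral_cmult) measurable
  finally show ?thesis .
qed

lemma int_step:
  assumes a: "a > 0" and x: "0 \<le> x"
  shows "set_integrable lborel {x..} (Qr a n)"
    and "(LINT y:{x..}|lborel. Qr a n y) = Qr a (Suc n) x / Suc n"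
proof -
  have nn: "\<And>y. 0 \<le> indicator {x..} y * Qr a n y"
    using Qr_facts(4)[OF a] x by (auto simp: indicator_def)
  have meas: "(\<lambda>y. indicator {x..} y * Qr a n y) \<in> borel_measurable lborel"
  proof -
    have "qn a n \<in> borel_measurable lborel"
      unfolding qn_def[abs_def]
      by (rule lborel.borel_measurable_nn_integral, rule lborel_pair_meas) measurable
    then show ?thesis unfolding Qr_def by measurable
  qed
  have T: "(\<integral>\<^sup>+y. ennreal (indicator {x..} y * Qr a n y) \<partial>lborel) = ennreal (Qr a (Suc n) x / Suc n)"
    using tonelli_step[OF a x, of n] Qr_facts(2)[OF a x, of "Suc n"] Qr_facts(4)[OF a x, of "Suc n"]
    by (simp add: ennreal_mult[symmetric])
  show I: "set_integrable lborel {x..} (Qr a n)"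
    unfolding set_integrable_def using T nn meas by (intro integrableI_nonneg) auto
  have "ennreal (\<integral>y. indicator {x..} y * Qr a n y \<partial>lborel) = ennreal (Qr a (Suc n) x / Suc n)"
    using nn_integral_eq_integral[of lborel "\<lambda>y. indicator {x..} y * Qr a n y"] I nn T
    unfolding set_integrable_def by auto
  moreover have "(\<integral>y. indicator {x..} y * Qr a n y \<partial>lborel) \<ge> 0"
    using nn by (intro integral_nonneg_AE) auto
  ultimately show "(LINT y:{x..}|lborel. Qr a n y) = Qr a (Suc n) x / Suc n"
    unfolding set_lebesgue_integral_def using Qr_facts(4)[OF a x, of "Suc n"] by simp
qed



lemma iter_tail_0: "iter_tail f 0 = f" and iter_mean_0: "iter_mean f 0 = 1"
  by (simp_all add: iter_tail_def iter_mean_def)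

lemma iter_tail_Suc: "iter_tail f (Suc s) x = (LINT t:{x..}|lborel. iter_tail f s t) / iter_mean f s"
  by (simp add: iter_tail_def iter_mean_def Let_def)

lemma iter_mean_Suc: "iter_mean f (Suc s) = (LINT t:{0..}|lborel. iter_tail f (Suc s) t)"
  by (simp add: iter_tail_def iter_mean_def Let_def)

lemma Qr0: "a > 0 \<Longrightarrow> 0 \<le> x \<Longrightarrow> Qr a 0 x = (LINT t:{x..}|lborel. wS a t)"
  using Qr_facts(3)[of a x 0] by simp

lemma div_helper: "(a::real) \<noteq> 0 \<Longrightarrow> b \<noteq> 0 \<Longrightarrow> c \<noteq> 0 \<Longrightarrow> (x / c / a) / (b / c / a) = x / b"
  by (simp add: field_simps)

lemma tail_formula:
  assumes a: "a > 0"
  shows "\<forall>x\<ge>0. iter_tail (weibull_density a) (Suc (Suc n)) x = Qr a n x / Qr a n 0"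
proof (induction n)
  case 0
  let ?f = "weibull_density a"
  have T1': "iter_tail ?f 1 t = wS a t" if "0 \<le> t" for t
    using T1[OF a that] by (simp add: iter_tail_Suc iter_tail_0 iter_mean_0 wS_def)
  have L: "(LINT t:{x..}|lborel. iter_tail ?f 1 t) = Qr a 0 x" if "0 \<le> x" for x
  proof -
    have "(LINT t:{x..}|lborel. iter_tail ?f 1 t) = (LINT t:{x..}|lborel. wS a t)"
      using that T1' by (intro set_lebesgue_integral_cong) auto
    then show ?thesis using Qr0[OF a that] by simp
  qed
  have m1: "iter_mean ?f 1 = Qr a 0 0"
    using L[of 0] by (simp add: iter_mean_Suc[of _ 0, simplified])
  show ?case
    using L m1 by (simp add: iter_tail_Suc[of _ 1, simplified])
next
  case (Suc n)
  let ?f = "weibull_density a"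
  have p0: "Qr a n 0 > 0" "Qr a (Suc n) 0 > 0" using Qr_pos[OF a] by auto
  have L: "(LINT t:{x..}|lborel. iter_tail ?f (Suc (Suc n)) t) = Qr a (Suc n) x / Suc n / Qr a n 0"
    if "0 \<le> x" for x
  proof -
    have "(LINT t:{x..}|lborel. iter_tail ?f (Suc (Suc n)) t) = (LINT t:{x..}|lborel. Qr a n t / Qr a n 0)"
      using that Suc.IH by (intro set_lebesgue_integral_cong) auto
    also have "\<dots> = (LINT t:{x..}|lborel. Qr a n t) / Qr a n 0" by simp
    also have "\<dots> = Qr a (Suc n) x / Suc n / Qr a n 0" using int_step(2)[OF a that, of n] by simp
    finally show ?thesis .
  qed
  have m: "iter_mean ?f (Suc (Suc n)) = Qr a (Suc n) 0 / Suc n / Qr a n 0"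
    using L[of 0] by (simp add: iter_mean_Suc)
  show ?case
  proof (intro allI impI)
    fix x :: real assume x: "0 \<le> x"
    have "iter_tail ?f (Suc (Suc (Suc n))) x = (Qr a (Suc n) x / Suc n / Qr a n 0) / (Qr a (Suc n) 0 / Suc n / Qr a n 0)"
      by (subst iter_tail_Suc) (simp only: L[OF x] m)
    also have "\<dots> = Qr a (Suc n) x / Qr a (Suc n) 0"
      using p0 by (intro div_helper) auto
    finally show "iter_tail ?f (Suc (Suc (Suc n))) x = Qr a (Suc n) x / Qr a (Suc n) 0" .
  qed
qed



definition wLim :: "real \<Rightarrow> real \<Rightarrow> real" where
  "wLim a x = (if a > 1 then 0 else if a = 1 then exp (- x) else 1)"

lemma mvt_powr:
  fixes a x u :: real
  assumes a: "a > 0" and x: "x > 0" and u: "u > 0"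
  shows "\<exists>z. u < z \<and> z < u + x \<and> (u + x) powr a - u powr a = x * (a * z powr (a - 1))"
proof -
  have "\<exists>z. u < z \<and> z < u + x \<and> ((u + x) powr a - u powr a = ((u + x) - u) * (a * z powr (a - 1)))"
    by (rule MVT2[of u "u + x" "\<lambda>t. t powr a" "\<lambda>z. a * z powr (a - 1)"]) (use x u in \<open>auto intro!: has_real_derivative_powr\<close>)
  then show ?thesis by simp
qed

lemma g_eq: "wS a (u + x) / wS a u = exp (- ((u + x) powr a - u powr a))"
  unfolding wS_def by (simp add: exp_diff[symmetric] exp_minus field_simps)

lemma g_lim:
  assumes a: "a > 0" and x: "x > 0"
  shows "((\<lambda>u. wS a (u + x) / wS a u) \<longlongrightarrow> wLim a x) at_top"
proof -
  define D where "D = (\<lambda>u. (u + x) powr a - u powr a)"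
  have g: "wS a (u + x) / wS a u = exp (- D u)" for u unfolding D_def by (rule g_eq)
  consider "a > 1" | "a = 1" | "a < 1" by linarith
  then show ?thesis
  proof cases
    case 1
    have lb: "D u \<ge> x * (a * u powr (a - 1))" if u0: "u > 0" for u
    proof -
      obtain z where z: "u < z" "D u = x * (a * z powr (a - 1))"
        using mvt_powr[OF a x u0] unfolding D_def by auto
      have "u powr (a - 1) \<le> z powr (a - 1)" using z(1) u0 1 by (intro powr_mono2) auto
      then show ?thesis using z(2) x a by (simp add: mult_left_mono)
    qed
    have "filterlim (\<lambda>u. u powr (a - 1)) at_top at_top" using 1 by (intro my_powr_at_top) simp
    then have "filterlim (\<lambda>u. x * a * u powr (a - 1)) at_top at_top"
      using x a by (intro filterlim_tendsto_pos_mult_at_top[OF tendsto_const]) auto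
    moreover have "eventually (\<lambda>u. x * a * u powr (a - 1) \<le> D u) at_top"
      using eventually_gt_at_top[of 0] by eventually_elim (simp add: lb mult.assoc)
    ultimately have "filterlim D at_top at_top"
      by (rule filterlim_at_top_mono)
    then have "filterlim (\<lambda>u. - D u) at_bot at_top" by (simp add: filterlim_uminus_at_top)
    then have "((\<lambda>u. exp (- D u)) \<longlongrightarrow> 0) at_top" by (rule filterlim_compose[OF exp_at_bot])
    then show ?thesis using 1 by (simp add: g wLim_def)
  next
    case 2
    have "eventually (\<lambda>u. exp (- x) = wS a (u + x) / wS a u) at_top"
      using eventually_gt_at_top[of 0]
      by eventually_elim (use x 2 in \<open>simp add: g_eq\<close>)
    then show ?thesis using 2 by (simp add: wLim_def tendsto_eventually) (rule Lim_transform_eventually[OF tendsto_const])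
  next
    case 3
    have b: "0 \<le> D u \<and> D u \<le> x * a * u powr (a - 1)" if u0: "u > 0" for u
    proof -
      obtain z where z: "u < z" "D u = x * (a * z powr (a - 1))"
        using mvt_powr[OF a x u0] unfolding D_def by auto
      have "z powr (a - 1) \<le> u powr (a - 1)" using z(1) u0 3 by (intro powr_mono2') auto
      then show ?thesis using z(2) x a by (simp add: mult_left_mono)
    qed
    have "((\<lambda>u. x * a * u powr (a - 1)) \<longlongrightarrow> x * a * 0) at_top"
      using 3 by (intro tendsto_mult tendsto_const tendsto_neg_powr filterlim_ident) auto
    moreover have "eventually (\<lambda>u. 0 \<le> D u) at_top"
      using eventually_gt_at_top[of 0] by eventually_elim (use b in blast)
    moreover have "eventually (\<lambda>u. D u \<le> x * a * u powr (a - 1)) at_top"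
      using eventually_gt_at_top[of 0] by eventually_elim (use b in blast)
    ultimately have "(D \<longlongrightarrow> 0) at_top"
      by (intro tendsto_sandwich[of "\<lambda>_. 0" D _ "\<lambda>u. x * a * u powr (a - 1)"]) auto
    then have "((\<lambda>u. exp (- D u)) \<longlongrightarrow> exp (- 0)) at_top" by (intro tendsto_intros)
    then show ?thesis using 3 by (simp add: g wLim_def)
  qed
qed



lemma G_bounds: "a > 0 \<Longrightarrow> x > 0 \<Longrightarrow> 0 \<le> u \<Longrightarrow> 0 < wS a (u + x) / wS a u \<and> wS a (u + x) / wS a u \<le> 1"
  using wS_pos[of a u] wS_pos[of a "u + x"] wS_mono[of u "u + x" a] by auto

lemma Lim_bounds: "0 \<le> x \<Longrightarrow> 0 \<le> wLim a x \<and> wLim a x \<le> 1"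
  unfolding wLim_def by auto

lemma main_limit:
  assumes a: "a > 0" and x: "x > 0"
  shows "(\<lambda>n. Qr a n x / Qr a n 0) \<longlonglongrightarrow> wLim a x"
proof -
  define w where "w = (\<lambda>(n::nat) u. indicator {0..} u * u ^ n * wS a u)"
  define G where "G = (\<lambda>u. wS a (u + x) / wS a u)"
  define L where "L = wLim a x"
  have wnn: "0 \<le> w n u" for n u
    unfolding w_def using wS_pos[of a u] by (auto simp: indicator_def)
  have wint: "integrable lborel (w n)" for n
    using Qr_facts(1)[OF a order_refl, of n] unfolding w_def by simp
  have W: "Qr a n 0 = (\<integral>u. w n u \<partial>lborel)" for n
    using Qr_facts(3)[OF a order_refl, of n] unfolding w_def set_lebesgue_integral_def
    by (simp add: mult.assoc)
  have Gb: "0 \<le> u \<Longrightarrow> 0 < G u \<and> G u \<le> 1" for u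
    unfolding G_def using G_bounds[OF a x] by blast
  have wG: "w n u * G u = indicator {0..} u * u ^ n * wS a (u + x)" for n u
    unfolding w_def G_def using wS_pos[of a u] by (auto simp: indicator_def)
  have V: "Qr a n x = (\<integral>u. w n u * G u \<partial>lborel)" for n
  proof -
    have "Qr a n x = (\<integral>t. indicator {x..} t * ((t - x) ^ n * wS a t) \<partial>lborel)"
      using Qr_facts(3)[OF a, of x n] x unfolding set_lebesgue_integral_def by simp
    also have "\<dots> = (\<integral>u. indicator {x..} (x + 1 * u) * ((x + 1 * u - x) ^ n * wS a (x + 1 * u)) \<partial>lborel)"
      by (subst lborel_integral_real_affine[where c=1 and t=x]) simp_all
    also have "\<dots> = (\<integral>u. w n u * G u \<partial>lborel)"
      unfolding wG by (intro Bochner_Integration.integral_cong) (auto simp: indicator_def add.commute)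
    finally show ?thesis .
  qed
  have wGint: "integrable lborel (\<lambda>u. w n u * G u)" for n
  proof (rule Bochner_Integration.integrable_bound[OF wint])
    show "(\<lambda>u. w n u * G u) \<in> borel_measurable lborel"
      unfolding wG by measurable
    show "AE u in lborel. norm (w n u * G u) \<le> norm (w n u)"
    proof (intro AE_I2)
      fix u :: real
      show "norm (w n u * G u) \<le> norm (w n u)"
      proof (cases "0 \<le> u")
        case True
        then show ?thesis using Gb[OF True] wnn[of n u]
          by (simp add: abs_mult mult_left_le)
      qed (simp add: w_def)
    qed
  qed
  have Wpos: "0 < (\<integral>u. w n u \<partial>lborel)" for n
    using Qr_pos[OF a, of n] W by simp
  show ?thesis
  proof (rule LIMSEQ_I)
    fix r :: real assume r: "0 < r"
    define e where "e = r / 2"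
    have e: "e > 0" using r by (simp add: e_def)
    have "eventually (\<lambda>u. dist (G u) L < e) at_top"
      using g_lim[OF a x] e unfolding G_def L_def tendsto_iff by blast
    then obtain N where N: "\<And>u. u \<ge> N \<Longrightarrow> \<bar>G u - L\<bar> < e"
      by (auto simp: eventually_at_top_linorder dist_real_def)
    define M where "M = max N 1"
    have M1: "M \<ge> 1" by (simp add: M_def)
    define c where "c = wS a (2 * M + 1)"
    have c: "c > 0" unfolding c_def by (rule wS_pos)
    obtain n0 where n0: "(1 / 2 :: real) ^ n0 < e * c / M"
      using real_arch_pow_inv[of "e * c / M" "1 / 2"] e c M1 by auto
    show "\<exists>no. \<forall>n\<ge>no. norm (Qr a n x / Qr a n 0 - wLim a x) < r"
    proof (intro exI allI impI)
      fix n assume n: "n \<ge> n0"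
      define Wn where "Wn = (\<integral>u. w n u \<partial>lborel)"
      define Vn where "Vn = (\<integral>u. w n u * G u \<partial>lborel)"
      have Wn: "Wn > 0" unfolding Wn_def by (rule Wpos)
      have pt: "\<bar>w n u * G u - L * w n u\<bar> \<le> e * w n u + M ^ n * indicator {0..M} u" for u
      proof -
        have "\<bar>w n u * G u - L * w n u\<bar> = w n u * \<bar>G u - L\<bar>"
        proof -
          have "w n u * G u - L * w n u = w n u * (G u - L)" by (simp add: algebra_simps)
          then show ?thesis using wnn[of n u] by (simp add: abs_mult)
        qed
        also have "\<dots> \<le> e * w n u + M ^ n * indicator {0..M} u"
        proof (cases "u < 0")
          case True then show ?thesis by (simp add: w_def indicator_def)
        next
          case False
          show ?thesis
          proof (cases "u \<ge> M")
            case True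
            then have "\<bar>G u - L\<bar> \<le> e" using N[of u] by (simp add: M_def)
            then have "w n u * \<bar>G u - L\<bar> \<le> w n u * e" using wnn[of n u] by (intro mult_left_mono) auto
            moreover have "0 \<le> M ^ n * indicator {0..M} u" using M1 by (simp add: indicator_def)
            ultimately show ?thesis by (simp add: mult.commute)
          next
          case False2: False
            have "\<bar>G u - L\<bar> \<le> 1" using Gb[of u] Lim_bounds[of x a] x False unfolding L_def by auto
            then have "w n u * \<bar>G u - L\<bar> \<le> w n u" using wnn[of n u] by (simp add: mult_left_le)
            also have "w n u \<le> M ^ n"
            proof -
              have "u ^ n \<le> M ^ n" using False False2 by (intro power_mono) auto
              moreover have "wS a u \<le> 1" using False a by (intro wS_le1) auto
              ultimately have "u ^ n * wS a u \<le> M ^ n * 1"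
                using False wS_pos[of a u] M1 by (intro mult_mono) auto
              then show ?thesis using False by (simp add: w_def)
            qed
            finally have "w n u * \<bar>G u - L\<bar> \<le> M ^ n" .
            moreover have "0 \<le> e * w n u" using e wnn[of n u] by simp
            ultimately show ?thesis using False False2 by (simp add: indicator_def)
          qed
        qed
        finally show ?thesis .
      qed
      have indint: "integrable lborel (\<lambda>u. M ^ n * indicator {0..M} u :: real)"
        using M1 by (intro integrable_mult_right) (simp add: integrable_indicator_iff)
      have "\<bar>Vn - L * Wn\<bar> = \<bar>\<integral>u. (w n u * G u - L * w n u) \<partial>lborel\<bar>"
        unfolding Vn_def Wn_def using wGint[of n] wint[of n] by simp
      also have "\<dots> \<le> (\<integral>u. \<bar>w n u * G u - L * w n u\<bar> \<partial>lborel)"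
        using integral_norm_bound[of lborel "\<lambda>u. w n u * G u - L * w n u"] by simp
      also have "\<dots> \<le> (\<integral>u. e * w n u + M ^ n * indicator {0..M} u \<partial>lborel)"
        by (intro integral_mono pt) (use wGint[of n] wint[of n] indint in auto)
      also have "\<dots> = e * Wn + M ^ n * M"
        unfolding Wn_def using wint[of n] indint M1 by (simp add: integral_add)
      finally have b1: "\<bar>Vn - L * Wn\<bar> \<le> e * Wn + M ^ Suc n" by (simp add: mult.commute)
      have "(\<integral>u. (2 * M) ^ n * c * indicator {2 * M .. 2 * M + 1} u \<partial>lborel) \<le> Wn"
        unfolding Wn_def
      proof (intro integral_mono)
        show "integrable lborel (\<lambda>u. (2 * M) ^ n * c * indicator {2 * M .. 2 * M + 1} u :: real)"
          by (intro integrable_mult_right) (simp add: integrable_indicator_iff)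
        show "integrable lborel (w n)" by (rule wint)
        fix u :: real
        show "(2 * M) ^ n * c * indicator {2 * M .. 2 * M + 1} u \<le> w n u"
        proof (cases "u \<in> {2 * M .. 2 * M + 1}")
          case True
          have "(2 * M) ^ n \<le> u ^ n" using True M1 by (intro power_mono) auto
          moreover have "c \<le> wS a u" unfolding c_def using True M1 a by (intro wS_mono) auto
          ultimately have "(2 * M) ^ n * c \<le> u ^ n * wS a u"
            using c M1 True by (intro mult_mono) auto
          then show ?thesis using True M1 by (simp add: w_def)
        qed (simp add: wnn)
      qed
      then have b2: "(2 * M) ^ n * c \<le> Wn" by simp
      have "\<bar>Vn / Wn - L\<bar> = \<bar>Vn - L * Wn\<bar> / Wn"
        using Wn by (simp add: field_simps)
      also have "\<dots> \<le> (e * Wn + M ^ Suc n) / Wn"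
        using b1 Wn by (simp add: divide_right_mono)
      also have "\<dots> = e + M ^ Suc n / Wn" using Wn by (simp add: field_simps)
      also have "\<dots> \<le> e + M ^ Suc n / ((2 * M) ^ n * c)"
        using b2 Wn c M1 by (intro add_left_mono divide_left_mono) auto
      also have "M ^ Suc n / ((2 * M) ^ n * c) = M / c * (1 / 2) ^ n"
        using M1 c by (simp add: power_mult_distrib field_simps)
      also have "\<dots> \<le> M / c * (1 / 2) ^ n0"
        using n M1 c by (intro mult_left_mono power_decreasing) auto
      also have "\<dots> < M / c * (e * c / M)"
        using n0 M1 c by (intro mult_strict_left_mono) auto
      also have "\<dots> = e" using M1 c by simp
      finally have "\<bar>Vn / Wn - L\<bar> < e + e" by simp
      then show "norm (Qr a n x / Qr a n 0 - wLim a x) < r"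
        unfolding Vn_def Wn_def e_def L_def using V[of n] W[of n] by simp
    qed
  qed
qed


theorem theorem6:
  fixes \<alpha> x :: real
  assumes "\<alpha> > 0" and "x > 0"
  shows "(\<lambda>s. iter_tail (weibull_density \<alpha>) s x) \<longlonglongrightarrow>
           (if \<alpha> > 1 then 0 else if \<alpha> = 1 then exp (- x) else 1)"
proof -
  have "(\<lambda>n. iter_tail (weibull_density \<alpha>) (n + 2) x) = (\<lambda>n. Qr \<alpha> n x / Qr \<alpha> n 0)"
    using tail_formula[OF assms(1)] assms(2) by (auto simp: numeral_2_eq_2)
  then have "(\<lambda>n. iter_tail (weibull_density \<alpha>) (n + 2) x) \<longlonglongrightarrow> wLim \<alpha> x"
    using main_limit[OF assms] by simp
  then show ?thesis unfolding wLim_def by (rule LIMSEQ_offset)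
qed

end
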